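(* Let $X$ be a continuum (nonempty compact connected metric space) and $f: X \rightarrow X$ a homeomorphism. If $f$ admits a special dendrite, then $h(C(f))=\infty$, and therefore $h(2^f)=\infty$.
   Context: $2^X$ (resp. $C(X)$) is the hyperspace of nonempty closed (resp. nonempty compact connected) subsets of $X$ with the Hausdorff metric, $2^f(A)=f(A)$, $C(f)=2^f|_{C(X)}$; $h$ is topological entropy. Special dendrite: in $\mathbb{R}^2$ let $p=(-1,0)$, $q=(1,0)$, $a_0=0$, $a_n=1-\frac{1}{n+1}$, $a_{-n}=-a_n$ ($n\ge1$), $L_n=\{a_n\}\times[0,\frac{1}{|n|+1}]$, $X_0=([-1,1]\times\{0\})\cup\bigcup_{n}L_n$. Let $F:X_0\to X_0$ be a homeomorphism such that $F|_{[-1,1]\times\{0\}}$ is a homeomorphism of the segment with $F(p)=p$, $F(q)=q$, $F((a_n,0))=(a_{n+1},0)$, and $F|_{L_n}:L_n\to L_{n+1}$ is a linear homeomorphism for each $n$. $f$ admits a special dendrite if there are a closed $\Lambda\subset X$ and $k\in\mathbb{N}$ with $\Lambda$ $f^k$-invariant and $f^k|_\Lambda$ topologically conjugate to $F$. *)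

theory Defs
  imports "HOL-Analysis.Analysis"
begin

definition hausdorff_dist :: "'a::metric_space set \<Rightarrow> 'a set \<Rightarrow> real" where
  "hausdorff_dist A B = max (SUP x\<in>A. infdist x B) (SUP y\<in>B. infdist y A)"

definition hyperspace :: "'a::metric_space set \<Rightarrow> 'a set set" where
  "hyperspace X = {A. A \<subseteq> X \<and> closed A \<and> A \<noteq> {}}"

definition continua_hyperspace :: "'a::metric_space set \<Rightarrow> 'a set set" where
  "continua_hyperspace X = {A. A \<subseteq> X \<and> compact A \<and> connected A \<and> A \<noteq> {}}"

text \<open>induced map 2^f (and C(f) when restricted to C(X))\<close>
definition induced_map :: "('a \<Rightarrow> 'b) \<Rightarrow> 'a set \<Rightarrow> 'b set" where
  "induced_map f A = f ` A"

definition separated_set ::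
  "('b \<Rightarrow> 'b \<Rightarrow> real) \<Rightarrow> ('b \<Rightarrow> 'b) \<Rightarrow> 'b set \<Rightarrow> nat \<Rightarrow> real \<Rightarrow> 'b set \<Rightarrow> bool" where
  "separated_set d g K n \<epsilon> E \<longleftrightarrow> E \<subseteq> K \<and> finite E \<and>
     (\<forall>x\<in>E. \<forall>y\<in>E. x \<noteq> y \<longrightarrow> (\<exists>i<n. d ((g ^^ i) x) ((g ^^ i) y) > \<epsilon>))"

definition top_entropy ::
  "('b \<Rightarrow> 'b \<Rightarrow> real) \<Rightarrow> ('b \<Rightarrow> 'b) \<Rightarrow> 'b set \<Rightarrow> ereal" where
  "top_entropy d g K = (SUP \<epsilon>\<in>{0<..}.
     limsup (\<lambda>n. SUP E\<in>{E. separated_set d g K n \<epsilon> E}. ereal (ln (real (card E)) / real n)))"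

definition dendrite_a :: "int \<Rightarrow> real" where
  "dendrite_a n = (if n = 0 then 0 else sgn (real_of_int n) * (1 - 1 / (real_of_int \<bar>n\<bar> + 1)))"

definition dendrite_L :: "int \<Rightarrow> (real \<times> real) set" where
  "dendrite_L n = {dendrite_a n} \<times> {0 .. 1 / (real_of_int \<bar>n\<bar> + 1)}"

definition dendrite_base :: "(real \<times> real) set" where
  "dendrite_base = {-1 .. 1} \<times> {0}"

definition dendrite_X0 :: "(real \<times> real) set" where
  "dendrite_X0 = dendrite_base \<union> (\<Union>n. dendrite_L n)"

definition special_dendrite_map :: "(real \<times> real \<Rightarrow> real \<times> real) \<Rightarrow> bool" where
  "special_dendrite_map F \<longleftrightarrow>
     (\<exists>G. homeomorphism dendrite_X0 dendrite_X0 F G) \<and>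
     (\<exists>G. homeomorphism dendrite_base dendrite_base F G) \<and>
     F (-1, 0) = (-1, 0) \<and> F (1, 0) = (1, 0) \<and>
     (\<forall>n. F (dendrite_a n, 0) = (dendrite_a (n + 1), 0)) \<and>
     (\<forall>n. F ` dendrite_L n = dendrite_L (n + 1) \<and>
          (\<exists>c m. \<forall>t\<in>{0 .. 1 / (real_of_int \<bar>n\<bar> + 1)}.
              F (dendrite_a n, t) = (dendrite_a (n + 1), c * t + m)))"

definition admits_special_dendrite :: "'a::metric_space set \<Rightarrow> ('a \<Rightarrow> 'a) \<Rightarrow> bool" where
  "admits_special_dendrite X f \<longleftrightarrow>
     (\<exists>F \<Lambda> k. special_dendrite_map F \<and> closed \<Lambda> \<and> \<Lambda> \<subseteq> X \<and> k \<ge> 1 \<and>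
        (f ^^ k) ` \<Lambda> \<subseteq> \<Lambda> \<and>
        (\<exists>\<phi> \<psi>. homeomorphism \<Lambda> dendrite_X0 \<phi> \<psi> \<and>
           (\<forall>x\<in>\<Lambda>. \<phi> ((f ^^ k) x) = F (\<phi> x))))"

end

theory Submission
  imports Defs
begin


definition dlen :: "int \<Rightarrow> real" where "dlen j = 1 / (real_of_int \<bar>j\<bar> + 1)"
definition dseg :: "int \<Rightarrow> real \<Rightarrow> (real \<times> real) set" where
  "dseg j r = {dendrite_a j} \<times> {0 .. r * dlen j}"

lemma dlen_pos: "dlen j > 0" by (simp add: dlen_def add_pos_nonneg)

lemma dseg_L: "0 \<le> r \<Longrightarrow> r \<le> 1 \<Longrightarrow> dseg j r \<subseteq> dendrite_L j"
  using dlen_pos[of j] unfolding dseg_def dendrite_L_def dlen_def[symmetric]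
  by (auto, smt (verit) mult_left_le_one_le)

lemma F_seg:
  assumes F: "special_dendrite_map F" and r: "0 \<le> r" "r \<le> 1"
  shows "F ` dseg j r = dseg (j+1) r"
proof -
  from F obtain c m where cm: "\<forall>t\<in>{0 .. dlen j}. F (dendrite_a j, t) = (dendrite_a (j + 1), c * t + m)"
    and img: "F ` dendrite_L j = dendrite_L (j+1)" and F0: "F (dendrite_a j, 0) = (dendrite_a (j+1), 0)"
    unfolding special_dendrite_map_def dlen_def by blast
  have lp: "dlen j > 0" "dlen (j+1) > 0" by (rule dlen_pos)+
  have m0: "m = 0" using cm F0 lp by force
  have L: "dendrite_L i = {dendrite_a i} \<times> {0 .. dlen i}" for i
    unfolding dendrite_L_def dlen_def by simp
  have "(dendrite_a (j+1), dlen (j+1)) \<in> F ` dendrite_L j" using img L lp by auto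
  then obtain t where t: "t \<in> {0..dlen j}" "dlen (j+1) = c * t" using cm m0 L by auto
  have c1: "c > 0" using t lp by (smt (verit) atLeastAtMost_iff mult_nonpos_nonneg)
  have "(dendrite_a j, dlen j) \<in> dendrite_L j" using L lp by auto
  hence "F (dendrite_a j, dlen j) \<in> dendrite_L (j+1)" using img by blast
  hence c2: "c * dlen j \<le> dlen (j+1)" using cm m0 L lp by auto
  have c3: "c * dlen j \<ge> dlen (j+1)" using t c1 by (simp add: mult_left_mono)
  have cdef: "c * dlen j = dlen (j+1)" using c2 c3 by simp
  have sub: "{0 .. r * dlen j} \<subseteq> {0 .. dlen j}" using r lp mult_left_le_one_le[of "dlen j" r] by auto
  have "F ` dseg j r = (\<lambda>t. (dendrite_a (j+1), c * t)) ` {0 .. r * dlen j}"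
  proof -
    have "dseg j r = (\<lambda>t. (dendrite_a j, t)) ` {0..r*dlen j}" unfolding dseg_def by auto
    hence "F ` dseg j r = (\<lambda>t. F (dendrite_a j, t)) ` {0..r*dlen j}" by (simp add: image_image)
    also have "\<dots> = (\<lambda>t. (dendrite_a (j+1), c * t)) ` {0 .. r * dlen j}"
      using cm m0 sub by (intro image_cong) auto
    finally show ?thesis .
  qed
  also have "\<dots> = {dendrite_a (j+1)} \<times> ((\<lambda>t. c * t) ` {0 .. r * dlen j})" by auto
  also have "(\<lambda>t. c * t) ` {0 .. r * dlen j} = {0 .. r * dlen (j+1)}"
  proof -
    have "(\<lambda>t. c * t) ` {0 .. r * dlen j} = {c*0 .. c * (r * dlen j)}"
      using image_mult_atLeastAtMost[of c 0 "r * dlen j"] c1 by simp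
    also have "c * (r * dlen j) = r * dlen (j+1)" using cdef by (simp add: algebra_simps)
    finally show ?thesis by simp
  qed
  finally show ?thesis unfolding dseg_def .
qed

definition Bt :: "nat \<Rightarrow> nat \<Rightarrow> nat list \<Rightarrow> nat \<Rightarrow> (real \<times> real) set" where
  "Bt K n w i = (\<Union>l<n. dendrite_base \<union> dseg (int i - int l) (real (w!l) / real K))"

lemma F_base: "special_dendrite_map F \<Longrightarrow> F ` dendrite_base = dendrite_base"
  unfolding special_dendrite_map_def homeomorphism_def by blast

lemma Bt_iter:
  assumes F: "special_dendrite_map F" and w: "\<forall>l<n. w!l \<le> K"
  shows "(F ^^ i) ` Bt K n w 0 = Bt K n w i"
proof (induction i)
  case 0 then show ?case by simp
next
  case (Suc i)
  have r: "0 \<le> real (w!l) / real K" "real (w!l) / real K \<le> 1" if "l<n" for l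
    using w that by (auto simp: divide_le_eq_1)
  have "(F ^^ Suc i) ` Bt K n w 0 = F ` Bt K n w i" using Suc.IH by (metis funpow.simps(2) image_comp)
  also have "\<dots> = Bt K n w (Suc i)" unfolding Bt_def image_UN image_Un F_base[OF F]
  proof (intro SUP_cong refl)
    fix l assume "l \<in> {..<n}"
    hence "F ` dseg (int i - int l) (real (w!l) / real K) = dseg (int i - int l + 1) (real (w!l) / real K)"
      using F_seg[OF F r] by simp
    moreover have "int i - int l + 1 = int (Suc i) - int l" by simp
    ultimately show "dendrite_base \<union> F ` dseg (int i - int l) (real (w!l) / real K) = dendrite_base \<union> dseg (int (Suc i) - int l) (real (w!l) / real K)"
      by simp
  qed
  finally show ?case .
qed

lemma a0: "dendrite_a 0 = 0" by (simp add: dendrite_a_def)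
lemma dlen0: "dlen 0 = 1" by (simp add: dlen_def)
lemma a_far: "j \<noteq> 0 \<Longrightarrow> \<bar>dendrite_a j\<bar> \<ge> 1/2"
proof -
  assume j: "j \<noteq> 0"
  hence "real_of_int \<bar>j\<bar> \<ge> 1" by linarith
  hence "1 - 1 / (real_of_int \<bar>j\<bar> + 1) \<ge> 1/2" by (simp add: field_simps)
  moreover have "\<bar>sgn (real_of_int j)\<bar> = 1" using j by (simp add: abs_sgn_eq)
  ultimately show ?thesis using j unfolding dendrite_a_def by (simp add: abs_mult)
qed

lemma Bt_sub: "\<forall>l<n. w!l \<le> K \<Longrightarrow> Bt K n w i \<subseteq> dendrite_X0"
proof -
  assume w: "\<forall>l<n. w!l \<le> K"
  have "dseg (int i - int l) (real (w!l) / real K) \<subseteq> dendrite_L (int i - int l)" if "l<n" for l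
    using w that by (intro dseg_L) (auto simp: divide_le_eq_1)
  thus ?thesis unfolding Bt_def dendrite_X0_def by blast
qed

lemma Bt_compact: "compact (Bt K n w i)"
  unfolding Bt_def dseg_def dendrite_base_def
  by (intro compact_UN compact_Un compact_Times) auto

lemma seg_conn:
  "connected (dendrite_base \<union> dseg j r)"
proof (cases "r * dlen j \<ge> 0")
  case True
  have "dendrite_a j \<in> {-1..1}" unfolding dendrite_a_def
    by (auto simp: sgn_if field_simps)
  hence "(dendrite_a j, 0) \<in> dendrite_base \<inter> dseg j r"
    unfolding dendrite_base_def dseg_def using True by auto
  moreover have "connected dendrite_base" unfolding dendrite_base_def
    by (intro connected_Times) auto
  moreover have "connected (dseg j r)" unfolding dseg_def
    by (intro connected_Times) auto
  ultimately show ?thesis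
    by (intro connected_Un) auto
next
  case False
  hence "dseg j r = {}" unfolding dseg_def by auto
  thus ?thesis unfolding dendrite_base_def by (auto intro: connected_Times)
qed

lemma Bt_connected: "connected (Bt K n w i)"
  unfolding Bt_def
proof (rule connected_Union)
  show "\<Inter> ((\<lambda>l. dendrite_base \<union> dseg (int i - int l) (real (w ! l) / real K)) ` {..<n}) \<noteq> {}"
    unfolding dendrite_base_def by auto
qed (auto simp: seg_conn)

lemma Bt_sep:
  assumes K: "K \<ge> 2" and i: "i < n" and lt: "w'!i < w!i"
  shows "\<exists>p\<in>Bt K n w i. \<forall>q\<in>Bt K n w' i. dist p q \<ge> 1 / real K"
proof -
  define p where "p = (0::real, real (w!i) / real K)"
  have Kp: "real K > 0" using K by simp
  have "p \<in> dseg (int i - int i) (real (w!i) / real K)"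
    unfolding p_def dseg_def by (simp add: a0 dlen0)
  hence pin: "p \<in> Bt K n w i" unfolding Bt_def using i by blast
  have "dist p q \<ge> 1 / real K" if q: "q \<in> Bt K n w' i" for q
  proof -
    have ds: "dist p q \<ge> \<bar>snd p - snd q\<bar>" "dist p q \<ge> \<bar>fst p - fst q\<bar>"
      using dist_snd_le[of p q] dist_fst_le[of p q] by (auto simp: dist_real_def)
    have wi: "real (w!i) \<ge> 1" using lt by simp
    from q obtain l where l: "l < n" "q \<in> dendrite_base \<union> dseg (int i - int l) (real (w'!l) / real K)"
      unfolding Bt_def by blast
    show ?thesis
    proof (cases "q \<in> dendrite_base")
      case True
      hence "snd q = 0" unfolding dendrite_base_def by auto
      hence "dist p q \<ge> real (w!i) / real K" using ds Kp by (simp add: p_def)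
      moreover have "real (w!i) / real K \<ge> 1 / real K" using wi Kp by (simp add: divide_right_mono)
      ultimately show ?thesis by linarith
    next
      case False
      hence qs: "q \<in> dseg (int i - int l) (real (w'!l) / real K)" using l by blast
      show ?thesis
      proof (cases "l = i")
        case True
        hence "snd q \<le> real (w'!i) / real K" using qs unfolding dseg_def by (auto simp: dlen0)
        moreover have "real (w'!i) \<le> real (w!i) - 1" using lt by simp
        moreover have "real (w'!i) / real K \<le> (real (w!i) - 1) / real K"
          using calculation(2) Kp by (simp add: divide_right_mono)
        moreover have "(real (w!i) - 1) / real K = real (w!i) / real K - 1 / real K"
          by (simp add: diff_divide_distrib)
        ultimately have "snd p - snd q \<ge> 1 / real K" unfolding p_def by simp
        thus ?thesis using ds by linarith
      next
        case False
        hence "int i - int l \<noteq> 0" by simp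
        hence "\<bar>fst q\<bar> \<ge> 1/2" using qs a_far unfolding dseg_def by auto
        moreover have "1 / real K \<le> 1/2" using K by (simp add: field_simps)
        ultimately show ?thesis using ds by (simp add: p_def)
      qed
    qed
  qed
  thus ?thesis using pin by blast
qed



lemma hd_ge:
  assumes "x \<in> A" "bounded A" "B \<noteq> {}" "e \<le> infdist x B"
  shows "e \<le> hausdorff_dist A B" "e \<le> hausdorff_dist B A"
proof -
  obtain b0 where b0: "b0 \<in> B" using assms by auto
  obtain r where r: "\<forall>y\<in>A. dist b0 y \<le> r" using assms(2) bounded_any_center by blast
  have "bdd_above ((\<lambda>y. infdist y B) ` A)"
  proof (rule bdd_aboveI2)
    fix y assume "y \<in> A"
    thus "infdist y B \<le> r" using infdist_le[OF b0, of y] r[rule_format, OF \<open>y \<in> A\<close>] dist_commute[of b0 y] by linarith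
  qed
  hence "infdist x B \<le> (SUP y\<in>A. infdist y B)" using assms(1) by (rule cSUP_upper2) simp
  thus "e \<le> hausdorff_dist A B" "e \<le> hausdorff_dist B A" using assms(4) unfolding hausdorff_dist_def
    by auto
qed

lemma infdist_ge:
  assumes "B \<noteq> {}" "\<forall>y\<in>B. e \<le> dist x y"
  shows "e \<le> infdist x B"
  using assms unfolding infdist_def by (auto intro: cINF_greatest)

lemma hd_self: "A \<noteq> {} \<Longrightarrow> hausdorff_dist A A = 0"
  unfolding hausdorff_dist_def by (simp add: infdist_zero)

lemma induced_pow: "(induced_map (f::'a\<Rightarrow>'a) ^^ (m::nat)) A = (f ^^ m) ` A"
proof -
  have e: "induced_map f = image f" by (rule ext) (simp add: induced_map_def)
  show ?thesis unfolding e
    by (induction m) (simp_all add: image_comp)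
qed



lemma conj_iter:
  assumes h: "homeomorphism \<Lambda> dendrite_X0 \<phi> \<psi>" and inv: "(f ^^ k) ` \<Lambda> \<subseteq> \<Lambda>"
    and c: "\<forall>x\<in>\<Lambda>. \<phi> ((f ^^ k) x) = F (\<phi> x)" and FX: "F ` dendrite_X0 \<subseteq> dendrite_X0"
    and B: "B \<subseteq> dendrite_X0"
  shows "\<psi> ` ((F ^^ i) ` B) = ((f ^^ k) ^^ i) ` (\<psi> ` B)"
proof -
  have step: "\<psi> (F y) = (f ^^ k) (\<psi> y)" if y: "y \<in> dendrite_X0" for y
  proof -
    have x: "\<psi> y \<in> \<Lambda>" "\<phi> (\<psi> y) = y" using h y unfolding homeomorphism_def by auto
    hence "(f ^^ k) (\<psi> y) \<in> \<Lambda>" using inv by auto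
    moreover have "\<phi> ((f ^^ k) (\<psi> y)) = F y" using c x by auto
    ultimately show ?thesis using h unfolding homeomorphism_def by metis
  qed
  have sub: "(F ^^ i) ` B \<subseteq> dendrite_X0" for i
  proof (induction i)
    case 0 then show ?case using B by simp
  next
    case (Suc i) then show ?case using FX by (simp add: image_comp[symmetric]) blast
  qed
  show ?thesis
  proof (induction i)
    case 0 then show ?case by simp
  next
    case (Suc i)
    have "\<psi> ` ((F ^^ Suc i) ` B) = \<psi> ` (F ` ((F ^^ i) ` B))" by (simp add: image_comp)
    also have "\<dots> = (f ^^ k) ` (\<psi> ` ((F ^^ i) ` B))"
      using step sub[of i] by (force simp: image_iff)
    also have "\<dots> = ((f ^^ k) ^^ Suc i) ` (\<psi> ` B)" using Suc.IH by (simp add: image_comp)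
    finally show ?case .
  qed
qed

lemma main_bound:
  fixes X :: "'a::metric_space set" and f :: "'a \<Rightarrow> 'a"
  assumes X: "compact X" and ad: "admits_special_dendrite X f"
  shows "\<exists>k\<ge>1. \<forall>K\<ge>2. \<exists>eps>0. \<forall>n\<ge>1. \<exists>E. separated_set hausdorff_dist (induced_map f)
           (continua_hyperspace X) (n*k) eps E \<and> E \<subseteq> hyperspace X \<and> card E = K^n"
proof -
  obtain F \<Lambda> k \<phi> \<psi> where F: "special_dendrite_map F" and cl: "closed \<Lambda>" and LX: "\<Lambda> \<subseteq> X"
    and k: "k \<ge> 1" and inv: "(f ^^ k) ` \<Lambda> \<subseteq> \<Lambda>" and h: "homeomorphism \<Lambda> dendrite_X0 \<phi> \<psi>"
    and c: "\<forall>x\<in>\<Lambda>. \<phi> ((f ^^ k) x) = F (\<phi> x)"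
    using ad unfolding admits_special_dendrite_def by blast
  obtain G where "homeomorphism dendrite_X0 dendrite_X0 F G"
    using F unfolding special_dendrite_map_def by blast
  hence FX: "F ` dendrite_X0 \<subseteq> dendrite_X0" using homeomorphism_image1 by blast
  have Lc: "compact \<Lambda>" using compact_Int_closed[OF X cl] LX by (simp add: Int_absorb1)
  have uc: "uniformly_continuous_on \<Lambda> \<phi>"
    using homeomorphism_cont1[OF h] Lc by (intro compact_uniformly_continuous)
  have hh: "\<forall>x\<in>\<Lambda>. \<psi> (\<phi> x) = x" "\<phi> ` \<Lambda> = dendrite_X0" "continuous_on \<Lambda> \<phi>"
     "\<psi> ` dendrite_X0 = \<Lambda>" "\<forall>y\<in>dendrite_X0. \<phi> (\<psi> y) = y" "continuous_on dendrite_X0 \<psi>"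
    using homeomorphism_apply1[OF h] homeomorphism_image1[OF h] homeomorphism_cont1[OF h]
      homeomorphism_image2[OF h] homeomorphism_apply2[OF h] homeomorphism_cont2[OF h] by auto
  show ?thesis
  proof (intro exI[of _ k] conjI k allI impI)
    fix K :: nat assume K: "K \<ge> 2"
    have Kp: "1 / real K > 0" using K by simp
    obtain \<delta> where dp: "\<delta> > 0" and dd: "\<forall>x\<in>\<Lambda>. \<forall>x'\<in>\<Lambda>. dist x' x < \<delta> \<longrightarrow> dist (\<phi> x') (\<phi> x) < 1 / real K"
      using uc[unfolded uniformly_continuous_on_def, rule_format, OF Kp] by blast
    show "\<exists>eps>0. \<forall>n\<ge>1. \<exists>E. separated_set hausdorff_dist (induced_map f)
           (continua_hyperspace X) (n*k) eps E \<and> E \<subseteq> hyperspace X \<and> card E = K^n"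
    proof (intro exI[of _ "\<delta>/2"] conjI allI impI)
      show "\<delta>/2 > 0" using dp by simp
      fix n :: nat assume n: "n \<ge> 1"
      define W where "W = {xs. set xs \<subseteq> {0..<K} \<and> length xs = n}"
      define S where "S w i = \<psi> ` Bt K n w i" for w i
      have Wp: "length w = n" "\<forall>l<n. w!l \<le> K" if "w \<in> W" for w
        proof -
        show "length w = n" using that unfolding W_def by simp
        show "\<forall>l<n. w!l \<le> K"
        proof (intro allI impI)
          fix l assume "l < n"
          hence "w ! l \<in> set w" using that unfolding W_def by simp
          thus "w ! l \<le> K" using that unfolding W_def by auto
        qed
      qed
      have Ssub: "S w i \<subseteq> \<Lambda>" if "w \<in> W" for w i
        unfolding S_def using Bt_sub[OF Wp(2)[OF that]] hh(4) by blast
      have Sbd: "bounded (S w i)" if "w \<in> W" for w i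
        using Ssub[OF that] compact_imp_bounded[OF Lc] bounded_subset by blast
      have Sne: "S w i \<noteq> {}" for w i
      proof -
        have "(-1, 0) \<in> Bt K n w i" unfolding Bt_def dendrite_base_def using n by (intro UN_I[of 0]) auto
        thus ?thesis unfolding S_def by blast
      qed
      have Siter: "(induced_map f ^^ (i*k)) (S w 0) = S w i" if "w \<in> W" for w i
      proof -
        have "(induced_map f ^^ (i*k)) (S w 0) = ((f ^^ k) ^^ i) ` (S w 0)"
          by (simp add: induced_pow funpow_mult mult.commute)
        also have "\<dots> = \<psi> ` ((F ^^ i) ` Bt K n w 0)" unfolding S_def
          using conj_iter[OF h inv c FX Bt_sub[OF Wp(2)[OF that]]] by simp
        also have "\<dots> = S w i" unfolding S_def using Bt_iter[OF F Wp(2)[OF that]] by simp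
        finally show ?thesis .
      qed
      have key: "\<delta> \<le> hausdorff_dist (S w i) (S w' i) \<and> \<delta> \<le> hausdorff_dist (S w' i) (S w i)"
        if w: "w \<in> W" "w' \<in> W" and i: "i < n" and lt: "w'!i < w!i" for w w' i
      proof -
        obtain p where p: "p \<in> Bt K n w i" and pq: "\<forall>q\<in>Bt K n w' i. dist p q \<ge> 1 / real K"
          using Bt_sep[OF K i lt] by blast
        have pX: "p \<in> dendrite_X0" using p Bt_sub[OF Wp(2)[OF w(1)]] by blast
        have "\<delta> \<le> dist (\<psi> p) y" if y: "y \<in> S w' i" for y
        proof (rule ccontr)
          assume "\<not> \<delta> \<le> dist (\<psi> p) y"
          hence lt2: "dist (\<psi> p) y < \<delta>" by simp
          obtain q where q: "q \<in> Bt K n w' i" "y = \<psi> q" using y unfolding S_def by blast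
          have qX: "q \<in> dendrite_X0" using q Bt_sub[OF Wp(2)[OF w(2)]] by blast
          have "\<psi> p \<in> \<Lambda>" "\<psi> q \<in> \<Lambda>" using pX qX hh(4) by auto
          hence "dist (\<phi> (\<psi> p)) (\<phi> (\<psi> q)) < 1 / real K" using dd[rule_format, of "\<psi> q" "\<psi> p"] lt2 q(2) by simp
          hence "dist p q < 1 / real K" using hh(5) pX qX by simp
          thus False using pq q(1) by (meson not_le)
        qed
        hence "\<delta> \<le> infdist (\<psi> p) (S w' i)" using Sne by (intro infdist_ge) auto
        moreover have "\<psi> p \<in> S w i" unfolding S_def using p by blast
        ultimately show ?thesis using hd_ge[OF _ Sbd[OF w(1)] Sne] by blast
      qed
      have sep: "\<exists>i<n. \<delta> \<le> hausdorff_dist (S w i) (S w' i)"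
        if w: "w \<in> W" "w' \<in> W" "w \<noteq> w'" for w w'
      proof -
        obtain i where i: "i < n" "w!i \<noteq> w'!i"
          proof (rule ccontr)
          assume "\<not> thesis"
          hence "\<forall>i<n. w!i = w'!i" using that by blast
          hence "w = w'" using Wp(1)[OF w(1)] Wp(1)[OF w(2)] by (intro nth_equalityI) auto
          thus False using w(3) by simp
        qed
        show ?thesis
        proof (cases "w'!i < w!i")
          case True thus ?thesis using key[OF w(1,2) i(1)] i by blast
        next
          case False hence "w!i < w'!i" using i by simp
          thus ?thesis using key[OF w(2,1) i(1)] i by blast
        qed
      qed
      have inj: "inj_on (\<lambda>w. S w 0) W"
      proof (rule inj_onI, rule ccontr)
        fix w w' assume w: "w \<in> W" "w' \<in> W" "S w 0 = S w' 0" "w \<noteq> w'"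
        obtain i where "i < n" "\<delta> \<le> hausdorff_dist (S w i) (S w' i)" using sep w by blast
        moreover have "S w i = S w' i" using Siter[OF w(1), of i] Siter[OF w(2), of i] w(3) by simp
        ultimately show False using hd_self[OF Sne] dp by simp
      qed
      define E where "E = (\<lambda>w. S w 0) ` W"
      have fW: "finite W" unfolding W_def by (rule finite_lists_length_eq) simp
      have cE: "card E = K^n" unfolding E_def using card_image[OF inj] card_lists_length_eq[of "{0..<K}" n]
        unfolding W_def by simp
      have Econt: "E \<subseteq> continua_hyperspace X"
      proof
        fix A assume "A \<in> E"
        then obtain w where w: "w \<in> W" "A = S w 0" unfolding E_def by blast
        have sub: "Bt K n w 0 \<subseteq> dendrite_X0" using Bt_sub[OF Wp(2)[OF w(1)]] .
        have cont: "continuous_on (Bt K n w 0) \<psi>" using hh(6) sub continuous_on_subset by blast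
        have "compact A" unfolding w(2) S_def using cont Bt_compact by (rule compact_continuous_image)
        moreover have "connected A" unfolding w(2) S_def using cont Bt_connected by (rule connected_continuous_image)
        ultimately show "A \<in> continua_hyperspace X" unfolding continua_hyperspace_def
          using Ssub[OF w(1)] LX Sne w(2) by auto
      qed
      have Ehyp: "E \<subseteq> hyperspace X" using Econt unfolding continua_hyperspace_def hyperspace_def
        by (auto intro: compact_imp_closed)
      have "separated_set hausdorff_dist (induced_map f) (continua_hyperspace X) (n*k) (\<delta>/2) E"
        unfolding separated_set_def
      proof (intro conjI ballI impI)
        show "E \<subseteq> continua_hyperspace X" by (rule Econt)
        show "finite E" unfolding E_def using fW by simp
        fix x y assume xy: "x \<in> E" "y \<in> E" "x \<noteq> y"
        then obtain w w' where w: "w \<in> W" "w' \<in> W" "x = S w 0" "y = S w' 0" unfolding E_def by blast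
        hence "w \<noteq> w'" using xy by blast
        then obtain i where i: "i < n" "\<delta> \<le> hausdorff_dist (S w i) (S w' i)" using sep w by blast
        have "i * k < n * k" using i k by simp
        moreover have "hausdorff_dist ((induced_map f ^^ (i*k)) x) ((induced_map f ^^ (i*k)) y) > \<delta>/2"
          using i(2) dp Siter w by simp
        ultimately show "\<exists>j<n*k. hausdorff_dist ((induced_map f ^^ j) x) ((induced_map f ^^ j) y) > \<delta>/2"
          by blast
      qed
      thus "\<exists>E. separated_set hausdorff_dist (induced_map f)
           (continua_hyperspace X) (n*k) (\<delta>/2) E \<and> E \<subseteq> hyperspace X \<and> card E = K^n"
        using Ehyp cE by blast
    qed
  qed
qed



lemma ent_ge:
  assumes k: "k \<ge> (1::nat)" and e: "eps > 0" and K: "K \<ge> (1::nat)"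
    and H: "\<forall>n\<ge>1. \<exists>E. separated_set d g S (n*k) eps E \<and> card E = K^n"
  shows "ereal (ln (real K) / real k) \<le> top_entropy d g S"
proof -
  define u where "u m = (SUP E\<in>{E. separated_set d g S m eps E}. ereal (ln (real (card E)) / real m))" for m
  define r where "r n = (n+1)*k" for n
  have sm: "strict_mono r" unfolding r_def using k by (intro strict_monoI) simp
  have lb: "ereal (ln (real K) / real k) \<le> (u \<circ> r) n" for n
  proof -
    have "\<exists>E. separated_set d g S ((n+1)*k) eps E \<and> card E = K^(n+1)"
      by (rule H[rule_format]) simp
    then obtain E where E: "separated_set d g S (r n) eps E" "card E = K^(n+1)"
      unfolding r_def by blast
    have Kp: "real K > 0" using K by simp
    have "ln (real (card E)) / real (r n) = ln (real K) / real k"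
    proof -
      have "real (card E) = real K ^ (n+1)" using E(2) by simp
      hence "ln (real (card E)) = real (n+1) * ln (real K)" using ln_realpow[of "real K" "n+1"] by simp
      moreover have "real (r n) = real (n+1) * real k" unfolding r_def by (simp only: of_nat_mult)
      moreover have nz: "real (n+1) \<noteq> 0" by (simp only: of_nat_eq_0_iff)
      ultimately show ?thesis using mult_divide_mult_cancel_left[OF nz, of "ln (real K)" "real k"] by (simp only:)
    qed
    moreover have "ereal (ln (real (card E)) / real (r n)) \<le> u (r n)"
    proof -
      have "E \<in> {E. separated_set d g S (r n) eps E}" using E(1) by simp
      thus ?thesis unfolding u_def by (rule SUP_upper)
    qed
    ultimately show ?thesis by simp
  qed
  have ev: "\<forall>\<^sub>F n in sequentially. ereal (ln (real K) / real k) \<le> (u \<circ> r) n"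
    by (rule always_eventually) (intro allI lb)
  have "ereal (ln (real K) / real k) \<le> limsup (u \<circ> r)"
    using le_Limsup[OF sequentially_bot ev] .
  also have "\<dots> \<le> limsup u" by (rule limsup_subseq_mono[OF sm])
  also have "\<dots> \<le> top_entropy d g S"
  proof -
    have "eps \<in> {0<..}" using e by simp
    thus ?thesis unfolding top_entropy_def u_def by (rule SUP_upper)
  qed
  finally show ?thesis .
qed

lemma ent_inf:
  assumes k: "k \<ge> (1::nat)"
    and H: "\<forall>K\<ge>2. \<exists>eps>0. \<forall>n\<ge>1. \<exists>E. separated_set d g S (n*k) eps E \<and> card E = (K::nat)^n"
  shows "top_entropy d g S = \<infinity>"
proof (rule ereal_top)
  fix B :: real
  define K where "K = nat \<lceil>exp (B * real k)\<rceil> + 2"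
  have K2: "K \<ge> 2" unfolding K_def by simp
  obtain eps where e: "eps > 0" "\<forall>n\<ge>1. \<exists>E. separated_set d g S (n*k) eps E \<and> card E = K^n"
    using H[rule_format, OF K2] by blast
  have rK: "real K = real (nat \<lceil>exp (B * real k)\<rceil>) + 2" unfolding K_def by (simp only: of_nat_add of_nat_numeral)
  have "exp (B * real k) \<le> real K" using real_nat_ceiling_ge[of "exp (B * real k)"] rK by linarith
  hence "ln (exp (B * real k)) \<le> ln (real K)"
    using ln_le_cancel_iff[of "exp (B * real k)" "real K"] K2 by simp
  hence "B * real k \<le> ln (real K)" by (simp only: ln_exp)
  moreover have kp: "real k > 0" using k by simp
  ultimately have "B \<le> ln (real K) / real k" using pos_le_divide_eq[OF kp] by blast
  hence "ereal B \<le> ereal (ln (real K) / real k)" by (simp only: ereal_less_eq)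
  also have "\<dots> \<le> top_entropy d g S" using ent_ge[OF k e(1) _ e(2)] K2 by simp
  finally show "ereal B \<le> top_entropy d g S" .
qed


theorem theorem5p19:
  fixes X :: "'a::metric_space set" and f :: "'a \<Rightarrow> 'a"
  assumes "compact X" and "connected X" and "X \<noteq> {}"
    and "\<exists>g. homeomorphism X X f g"
    and "admits_special_dendrite X f"
  shows "top_entropy hausdorff_dist (induced_map f) (continua_hyperspace X) = \<infinity>
       \<and> top_entropy hausdorff_dist (induced_map f) (hyperspace X) = \<infinity>"
proof -
  obtain k where k: "k \<ge> 1" and H: "\<forall>K\<ge>2. \<exists>eps>0. \<forall>n\<ge>1. \<exists>E. separated_set hausdorff_dist (induced_map f)
           (continua_hyperspace X) (n*k) eps E \<and> E \<subseteq> hyperspace X \<and> card E = K^n"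
    using main_bound[OF assms(1) assms(5)] by (elim exE conjE)
  let ?g = "induced_map f" and ?d = hausdorff_dist
  have H12: "\<exists>eps>0. (\<forall>n\<ge>1. \<exists>E. separated_set ?d ?g (continua_hyperspace X) (n*k) eps E \<and> card E = K^n)
     \<and> (\<forall>n\<ge>1. \<exists>E. separated_set ?d ?g (hyperspace X) (n*k) eps E \<and> card E = K^n)"
    if K: "K \<ge> 2" for K :: nat
  proof -
    obtain eps where e1: "eps > 0" and e2: "\<forall>n\<ge>1. \<exists>E. separated_set ?d ?g
           (continua_hyperspace X) (n*k) eps E \<and> E \<subseteq> hyperspace X \<and> card E = K^n"
      using H[rule_format, OF K] by (elim exE conjE)
    have P: "(\<exists>E. separated_set ?d ?g (continua_hyperspace X) (n*k) eps E \<and> card E = K^n)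
       \<and> (\<exists>E. separated_set ?d ?g (hyperspace X) (n*k) eps E \<and> card E = K^n)" if n: "n \<ge> 1" for n
    proof -
      obtain E where E1: "separated_set ?d ?g (continua_hyperspace X) (n*k) eps E"
        and E2: "E \<subseteq> hyperspace X" and E3: "card E = K^n"
        using e2[rule_format, OF n] by (elim exE conjE)
      have "separated_set ?d ?g (hyperspace X) (n*k) eps E"
        using E1 E2 unfolding separated_set_def by (elim conjE) (intro conjI)
      thus ?thesis using E1 E3 by (intro conjI exI)
    qed
    show ?thesis
      by (rule exI[of _ eps], intro conjI e1 allI impI) (simp_all add: P)
  qed
  have H1: "\<forall>K\<ge>2. \<exists>eps>0. \<forall>n\<ge>1. \<exists>E. separated_set ?d ?g (continua_hyperspace X) (n*k) eps E \<and> card E = K^n"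
  proof (intro allI impI)
    fix K :: nat assume K: "K \<ge> 2"
    obtain eps where "eps > 0" "\<forall>n\<ge>1. \<exists>E. separated_set ?d ?g (continua_hyperspace X) (n*k) eps E \<and> card E = K^n"
      using H12[OF K] by (elim exE conjE)
    thus "\<exists>eps>0. \<forall>n\<ge>1. \<exists>E. separated_set ?d ?g (continua_hyperspace X) (n*k) eps E \<and> card E = K^n"
      by (intro exI conjI)
  qed
  have H2: "\<forall>K\<ge>2. \<exists>eps>0. \<forall>n\<ge>1. \<exists>E. separated_set ?d ?g (hyperspace X) (n*k) eps E \<and> card E = K^n"
  proof (intro allI impI)
    fix K :: nat assume K: "K \<ge> 2"
    obtain eps where "eps > 0" "\<forall>n\<ge>1. \<exists>E. separated_set ?d ?g (hyperspace X) (n*k) eps E \<and> card E = K^n"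
      using H12[OF K] by (elim exE conjE)
    thus "\<exists>eps>0. \<forall>n\<ge>1. \<exists>E. separated_set ?d ?g (hyperspace X) (n*k) eps E \<and> card E = K^n"
      by (intro exI conjI)
  qed
  show ?thesis using ent_inf[OF k H1] ent_inf[OF k H2] by (intro conjI)
qed

end
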